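(* Let $g$ be a non-constant entire function of finite order $\rho\ge0$ whose Taylor coefficients are all non-negative, and let $f=e^g$. Let $(X_t)_{t\ge0}$ be the Khinchin family of $f$ and $\breve{X}_t$ its normalization, and let $Z$ be a standard normal random variable. Then $$\lim_{t\to\infty}\mathbf{E}(\breve{X}_t^m)=\mathbf{E}(Z^m)\quad\text{for every integer } m\ge1.$$
   Context: Such $f=\sum_n a_nz^n$ is entire, with $a_n\ge0$ and $a_0=e^{g(0)}>0$. For $t>0$, $X_t$ is the random variable with $\mathbf{P}(X_t=n)=a_nt^n/f(t)$, $n\ge0$. With $m_f(t)=\mathbf{E}(X_t)$ and $\sigma_f^2(t)=\mathbf{V}(X_t)>0$, the normalization is $\breve{X}_t=(X_t-m_f(t))/\sigma_f(t)$. The order of an entire function $g$ is $\limsup_{r\to\infty}\frac{\ln\ln\max_{|z|=r}|g(z)|}{\ln r}$. *)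

theory Defs
  imports "HOL-Complex_Analysis.Complex_Analysis" "HOL-Probability.Probability"
begin

definition taylor_coeff :: "(complex \<Rightarrow> complex) \<Rightarrow> nat \<Rightarrow> complex" where
  "taylor_coeff h n = (deriv ^^ n) h 0 / of_nat (fact n)"

definition entire_order :: "(complex \<Rightarrow> complex) \<Rightarrow> ereal" where
  "entire_order h = Limsup at_top
     (\<lambda>r::real. ereal (ln (ln (Sup ((\<lambda>z. norm (h z)) ` sphere 0 r))) / ln r))"

text \<open>Khinchin family of a power series f = sum a_n z^n with a_n >= 0:
  P(X_t = n) = a_n t^n / f(t).\<close>
definition khinchin_prob :: "(complex \<Rightarrow> complex) \<Rightarrow> real \<Rightarrow> nat \<Rightarrow> real" where
  "khinchin_prob f t n = Re (taylor_coeff f n) * t ^ n / Re (f (of_real t))"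

definition khinchin_mean :: "(complex \<Rightarrow> complex) \<Rightarrow> real \<Rightarrow> real" where
  "khinchin_mean f t = (\<Sum>n. real n * khinchin_prob f t n)"

definition khinchin_var :: "(complex \<Rightarrow> complex) \<Rightarrow> real \<Rightarrow> real" where
  "khinchin_var f t = (\<Sum>n. (real n - khinchin_mean f t)^2 * khinchin_prob f t n)"

definition khinchin_norm_moment :: "(complex \<Rightarrow> complex) \<Rightarrow> real \<Rightarrow> nat \<Rightarrow> real" where
  "khinchin_norm_moment f t k =
     (\<Sum>n. ((real n - khinchin_mean f t) / sqrt (khinchin_var f t)) ^ k * khinchin_prob f t n)"

end

theory Submission
  imports Defs "HOL-Real_Asymp.Real_Asymp"
begin

lemma exp_rem_bound:
  fixes z :: complex
  shows "norm (exp z - (\<Sum>k<m. z^k / fact k)) \<le> norm z ^ m * exp (norm z)"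
proof -
  have "(\<lambda>n. z^n / fact n) sums exp z"
    using exp_converges[of z] by (simp add: scaleR_conv_of_real divide_inverse mult.commute)
  hence S: "(\<lambda>i. z^(i+m) / fact (i+m)) sums (exp z - (\<Sum>k<m. z^k / fact k))"
    by (subst sums_iff_shift) simp
  have R: "(\<lambda>n. norm z^n / fact n) sums exp (norm z)"
    using exp_converges[of "norm z"] by (simp add: divide_inverse mult.commute)
  have B: "norm (z^(i+m) / fact (i+m)) \<le> norm z ^ m * (norm z^i / fact i)" for i
  proof -
    have "norm (z^(i+m) / fact (i+m)) = norm z ^ m * norm z ^ i / fact (i+m)"
      by (simp add: norm_divide norm_power power_add norm_mult)
    also have "\<dots> \<le> norm z ^ m * norm z ^ i / fact i"
      by (intro divide_left_mono) (auto intro: fact_mono)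
    finally show ?thesis by simp
  qed
  have "norm (exp z - (\<Sum>k<m. z^k / fact k)) = norm (\<Sum>i. z^(i+m) / fact (i+m))"
    using S by (simp add: sums_iff)
  also have "\<dots> \<le> (\<Sum>i. norm z ^ m * (norm z^i / fact i))"
    by (rule norm_suminf_le[OF B]) (intro summable_mult sums_summable[OF R])
  also have "\<dots> = norm z ^ m * exp (norm z)"
    using sums_mult[OF R, of "norm z ^ m"] by (simp add: sums_iff)
  finally show ?thesis .
qed

definition esum :: "(nat \<Rightarrow> complex) \<Rightarrow> (nat \<Rightarrow> real) \<Rightarrow> complex \<Rightarrow> complex" where
  "esum d x = (\<lambda>\<theta>. \<Sum>n. d n * exp (\<theta> * of_real (x n)))"

definition good :: "(nat \<Rightarrow> complex) \<Rightarrow> (nat \<Rightarrow> real) \<Rightarrow> bool" where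
  "good d x \<longleftrightarrow> (\<forall>a\<ge>0. summable (\<lambda>n. norm (d n) * exp (a * \<bar>x n\<bar>)))"

lemma good_mult:
  assumes "good d x" shows "good (\<lambda>n. d n * of_real (x n)) x"
  unfolding good_def
proof (intro allI impI)
  fix a :: real assume a: "a \<ge> 0"
  have s: "summable (\<lambda>n. norm (d n) * exp ((a+1) * \<bar>x n\<bar>))"
    using assms a unfolding good_def by auto
  show "summable (\<lambda>n. norm (d n * of_real (x n)) * exp (a * \<bar>x n\<bar>))"
  proof (rule summable_comparison_test[OF _ s], intro exI allI impI)
    fix n
    have "\<bar>x n\<bar> \<le> exp \<bar>x n\<bar>" using exp_ge_add_one_self[of "\<bar>x n\<bar>"] by linarith
    hence "norm (d n) * \<bar>x n\<bar> * exp (a * \<bar>x n\<bar>) \<le> norm (d n) * exp \<bar>x n\<bar> * exp (a * \<bar>x n\<bar>)"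
      by (intro mult_right_mono mult_left_mono) auto
    also have "\<dots> = norm (d n) * exp ((a+1) * \<bar>x n\<bar>)"
      by (simp add: algebra_simps exp_add)
    finally show "norm (norm (d n * of_real (x n)) * exp (a * \<bar>x n\<bar>)) \<le> norm (d n) * exp ((a+1) * \<bar>x n\<bar>)"
      by (simp add: norm_mult)
  qed
qed

lemma good_pow:
  assumes "good d x" shows "good (\<lambda>n. d n * of_real (x n) ^ k) x"
proof (induction k)
  case 0 then show ?case using assms by simp
next
  case (Suc k)
  from good_mult[OF Suc] show ?case by (simp add: algebra_simps)
qed

lemma norm_exp_bound:
  fixes d \<theta> :: complex and x R :: real
  assumes "norm \<theta> \<le> R"
  shows "norm (d * exp (\<theta> * of_real x)) \<le> norm d * exp (R * \<bar>x\<bar>)"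
proof -
  have "Re (\<theta> * of_real x) \<le> R * \<bar>x\<bar>"
  proof -
    have "Re (\<theta> * of_real x) = Re \<theta> * x" by simp
    also have "\<dots> \<le> \<bar>Re \<theta>\<bar> * \<bar>x\<bar>" by (metis abs_ge_self abs_mult)
    also have "\<dots> \<le> R * \<bar>x\<bar>" using abs_Re_le_cmod[of \<theta>] assms by (intro mult_right_mono) auto
    finally show ?thesis .
  qed
  thus ?thesis by (simp add: norm_mult mult_left_mono)
qed

lemma good_summable:
  assumes "good d x" shows "summable (\<lambda>n. d n * exp (\<theta> * of_real (x n)))"
proof -
  have "summable (\<lambda>n. norm (d n) * exp (norm \<theta> * \<bar>x n\<bar>))" using assms unfolding good_def by auto
  hence "summable (\<lambda>n. norm (d n * exp (\<theta> * of_real (x n))))"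
    by (rule summable_comparison_test[rotated]) (auto intro: norm_exp_bound)
  thus ?thesis by (rule summable_norm_cancel)
qed

lemma esum_deriv:
  assumes "good d x"
  shows "(esum d x has_field_derivative esum (\<lambda>n. d n * of_real (x n)) x \<theta>) (at \<theta>)"
proof -
  define R where "R = norm \<theta> + 1"
  have g1: "good (\<lambda>n. d n * of_real (x n)) x" by (rule good_mult[OF assms])
  have "summable (\<lambda>n. norm (d n * of_real (x n)) * exp (R * \<bar>x n\<bar>))"
    using g1 unfolding good_def R_def by auto
  have "summable (\<lambda>n. d n * exp (0 * of_real (x n)))" by (rule good_summable[OF assms])
  note * = has_field_derivative_series'[of "ball 0 R" "\<lambda>n \<theta>. d n * exp (\<theta> * of_real (x n))"
     "\<lambda>n \<theta>. d n * of_real (x n) * exp (\<theta> * of_real (x n))" 0 \<theta>]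
  have "((\<lambda>\<theta>. \<Sum>n. d n * exp (\<theta> * of_real (x n))) has_field_derivative
         (\<Sum>n. d n * of_real (x n) * exp (\<theta> * of_real (x n)))) (at \<theta>)"
  proof (rule *(2))
    show "convex (ball (0::complex) R)" by simp
    show "((\<lambda>\<theta>. d n * exp (\<theta> * of_real (x n))) has_field_derivative d n * of_real (x n) * exp (\<theta> * of_real (x n))) (at \<theta> within ball 0 R)" for n \<theta>
      by (auto intro!: derivative_eq_intros)
    show "uniformly_convergent_on (ball 0 R) (\<lambda>N \<theta>. \<Sum>n<N. d n * of_real (x n) * exp (\<theta> * of_real (x n)))"
      by (rule Weierstrass_m_test'[OF _ \<open>summable (\<lambda>n. norm (d n * of_real (x n)) * exp (R * \<bar>x n\<bar>))\<close>])
         (rule norm_exp_bound, auto)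
    show "(0::complex) \<in> ball 0 R" by (simp add: R_def add_nonneg_pos)
    show "summable (\<lambda>n. d n * exp (0 * of_real (x n)))" by fact
    show "\<theta> \<in> interior (ball 0 R)" by (simp add: R_def)
  qed
  thus ?thesis unfolding esum_def by simp
qed

lemma esum_holo: "good d x \<Longrightarrow> esum d x holomorphic_on A"
  using esum_deriv by (meson field_differentiable_def field_differentiable_at_within holomorphic_on_def)

lemma higher_deriv_esum:
  assumes "good d x"
  shows "(deriv ^^ k) (esum d x) = esum (\<lambda>n. d n * of_real (x n) ^ k) x"
proof (induction k)
  case 0 then show ?case by (simp add: esum_def)
next
  case (Suc k)
  have "(deriv ^^ Suc k) (esum d x) = deriv (esum (\<lambda>n. d n * of_real (x n) ^ k) x)"
    using Suc by simp
  also have "\<dots> = esum (\<lambda>n. d n * of_real (x n) ^ k * of_real (x n)) x"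
    by (rule ext, rule DERIV_imp_deriv, rule esum_deriv, rule good_pow[OF assms])
  also have "\<dots> = esum (\<lambda>n. d n * of_real (x n) ^ Suc k) x"
    by (simp add: algebra_simps)
  finally show ?case .
qed

definition gau :: "complex \<Rightarrow> complex" where "gau \<theta> = exp (\<theta>^2 / 2)"

lemma gau_has_deriv: "(gau has_field_derivative \<theta> * gau \<theta>) (at \<theta>)"
  unfolding gau_def by (auto intro!: derivative_eq_intros simp: power2_eq_square)

lemma gau_holo: "gau holomorphic_on A"
  using gau_has_deriv by (meson field_differentiable_def field_differentiable_at_within holomorphic_on_def)

lemma gau_deriv: "deriv gau = (\<lambda>\<theta>. \<theta> * gau \<theta>)"
  by (rule ext, rule DERIV_imp_deriv, rule gau_has_deriv)

lemma gau_rec: "(deriv ^^ Suc (Suc k)) gau 0 = of_nat (Suc k) * (deriv ^^ k) gau 0"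
proof -
  have "(deriv ^^ Suc (Suc k)) gau = (deriv ^^ Suc k) (deriv gau)"
    by (simp only: funpow_Suc_right o_apply)
  hence "(deriv ^^ Suc (Suc k)) gau 0 = (deriv ^^ Suc k) (\<lambda>\<theta>. \<theta> * gau \<theta>) 0"
    by (simp add: gau_deriv)
  also have "\<dots> = (\<Sum>i = 0..Suc k. of_nat (Suc k choose i) * (deriv ^^ i) (\<lambda>w. w) 0 * (deriv ^^ (Suc k - i)) gau 0)"
    by (rule higher_deriv_mult[of _ UNIV]) (auto intro: gau_holo)
  also have "\<dots> = (\<Sum>i = 0..Suc k. (if i = 1 then of_nat (Suc k) * (deriv ^^ k) gau 0 else 0))"
    by (rule sum.cong) auto
  also have "\<dots> = of_nat (Suc k) * (deriv ^^ k) gau 0" by simp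
  finally show ?thesis .
qed

lemma key_gau: fixes F f P n :: real assumes "F>0" "f>0" "P>0" "n \<ge> 0"
  shows "(2*n+1) * (F/(P*f)) = (2*n+2)*(2*n+1)*F/(2*P*((n+1)*f))"
proof -
  have "(2*n+2)*(2*n+1)*F/(2*P*((n+1)*f)) = ((n+1)*(2*((2*n+1)*F)))/((n+1)*(2*(P*f)))"
    by (simp add: algebra_simps)
  also have "\<dots> = (2*((2*n+1)*F))/(2*(P*f))" using assms by (intro mult_divide_mult_cancel_left) auto
  also have "\<dots> = (2*n+1) * (F/(P*f))" by simp
  finally show ?thesis by simp
qed

lemma gau_even_odd:
  "(deriv ^^ (2*j)) gau 0 = of_real (fact (2 * j) / (2^j * fact j)) \<and> (deriv ^^ (2*j+1)) gau 0 = 0"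
proof (induction j)
  case 0
  have "(deriv ^^ 1) gau 0 = 0" by (simp add: gau_deriv)
  then show ?case by (simp add: gau_def[of 0])
next
  case (Suc j)
  have e: "(deriv ^^ (2 * Suc j)) gau 0 = of_nat (2*j+1) * (deriv ^^ (2*j)) gau 0"
    using gau_rec[of "2*j"] by (simp add: numeral_2_eq_2)
  have o: "(deriv ^^ (2 * Suc j + 1)) gau 0 = of_nat (2*j+2) * (deriv ^^ (2*j+1)) gau 0"
    using gau_rec[of "2*j+1"] by (simp add: numeral_2_eq_2)
  have "(of_nat (2*j+1) :: complex) * of_real (fact (2 * j) / (2^j * fact j)) = of_real (fact (2 * Suc j) / (2^Suc j * fact (Suc j)))"
  proof -
    have "real (2*j+1) * (fact (2 * j) / (2^j * fact j)) = fact (2 * Suc j) / (2^Suc j * fact (Suc j))"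
    proof -
      have e2: "2 * Suc j = Suc (Suc (2*j))" by simp
      have f1: "(fact (2 * Suc j)::real) = (2*real j + 2) * (2*real j + 1) * fact (2*j)"
        unfolding e2 fact_Suc by (simp add: algebra_simps)
      have f2: "(fact (Suc j)::real) = (real j + 1) * fact j" by simp
      have p: "(fact (2*j)::real) > 0" "(fact j::real) > 0" "(2::real)^j > 0" "real j + 1 > 0" by auto
      show ?thesis unfolding f1 f2 using key_gau[of "fact (2*j)" "fact j" "2^j" "real j"] by (simp add: add.commute)
    qed
    thus ?thesis by (metis of_real_mult of_real_of_nat_eq)
  qed
  then show ?case using Suc e o by simp
qed

lemma gau_moment: "(deriv ^^ k) gau 0 = of_real (integral\<^sup>L lborel (\<lambda>x. std_normal_density x * x ^ k))"
proof (cases "even k")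
  case True
  then obtain j where "k = 2*j" by blast
  then show ?thesis using gau_even_odd[of j] integral_std_normal_moment_even[of j] by simp
next
  case False
  then obtain j where "k = 2*j+1" using oddE by blast
  then show ?thesis using gau_even_odd[of j] integral_std_normal_moment_odd[of j] by simp
qed

locale kh =
  fixes g :: "complex \<Rightarrow> complex"
  assumes entire: "g holomorphic_on UNIV"
    and nonconst: "\<not> (\<exists>c. \<forall>z. g z = c)"
    and coeff_nonneg: "\<And>n. Im (taylor_coeff g n) = 0 \<and> Re (taylor_coeff g n) \<ge> 0"
begin

definition \<beta> :: "nat \<Rightarrow> real" where "\<beta> n = Re (taylor_coeff g n)"
definition a :: "nat \<Rightarrow> complex" where "a n = taylor_coeff (\<lambda>z. exp (g z)) n"
definition Gr :: "real \<Rightarrow> real" where "Gr r = (\<Sum>n. \<beta> n * r^n)"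
definition K1 :: "real \<Rightarrow> real" where "K1 t = (\<Sum>n. \<beta> n * t^n * real n)"
definition K2 :: "real \<Rightarrow> real" where "K2 t = (\<Sum>n. \<beta> n * t^n * real n ^ 2)"
definition dB :: "real \<Rightarrow> nat \<Rightarrow> complex" where "dB t n = of_real (\<beta> n * t^n)"
definition c :: "real \<Rightarrow> nat \<Rightarrow> complex" where "c t n = a n * of_real t ^ n / exp (g (of_real t))"

lemma beta_nonneg: "\<beta> n \<ge> 0" using coeff_nonneg unfolding \<beta>_def by auto

lemma tc_g: "taylor_coeff g n = of_real (\<beta> n)"
  using coeff_nonneg[of n] unfolding \<beta>_def by (simp add: complex_eq_iff)

lemma f_holo: "(\<lambda>z. exp (g z)) holomorphic_on UNIV"
  using entire by (intro holomorphic_intros) auto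

lemma g_sums: "(\<lambda>n. of_real (\<beta> n) * w^n) sums g w"
proof -
  have "(\<lambda>n. (deriv ^^ n) g 0 / fact n * (w - 0)^n) sums g w"
    by (rule holomorphic_power_series[of g 0 "norm w + 1"])
       (use entire in \<open>auto intro: holomorphic_on_subset\<close>)
  moreover have "(deriv ^^ n) g 0 / fact n * (w - 0)^n = of_real (\<beta> n) * w^n" for n
  proof -
    have "(deriv ^^ n) g 0 / fact n = of_real (\<beta> n)" using tc_g[of n] unfolding taylor_coeff_def by simp
    thus ?thesis by (simp only: diff_zero)
  qed
  ultimately show ?thesis by simp
qed

lemma f_sums: "(\<lambda>n. a n * w^n) sums exp (g w)"
proof -
  have "(\<lambda>n. (deriv ^^ n) (\<lambda>z. exp (g z)) 0 / fact n * (w - 0)^n) sums (\<lambda>z. exp (g z)) w"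
    by (rule holomorphic_power_series[of "\<lambda>z. exp (g z)" 0 "norm w + 1" w])
       (use f_holo in \<open>auto intro: holomorphic_on_subset\<close>)
  moreover have "(deriv ^^ n) (\<lambda>z. exp (g z)) 0 / fact n * (w - 0)^n = a n * w^n" for n
    unfolding a_def taylor_coeff_def by (simp only: diff_zero of_nat_fact)
  ultimately show ?thesis by simp
qed

lemma beta_summable: assumes "r \<ge> 0" shows "summable (\<lambda>n. \<beta> n * r^n)"
proof -
  have "summable (\<lambda>n. norm (of_real (\<beta> n) * (of_real r :: complex)^n))"
    by (rule powser_insidea[OF sums_summable[OF g_sums[of "of_real (r+1)"]]]) (use assms in auto)
  thus ?thesis using beta_nonneg assms by (simp add: norm_mult norm_power)
qed

lemma a_summable: assumes "r \<ge> 0" shows "summable (\<lambda>n. norm (a n) * r^n)"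
proof -
  have "summable (\<lambda>n. norm (a n * (of_real r :: complex)^n))"
    by (rule powser_insidea[OF sums_summable[OF f_sums[of "of_real (r+1)"]]]) (use assms in auto)
  thus ?thesis using assms by (simp add: norm_mult norm_power)
qed

lemma Gr_sums: "(\<lambda>n. \<beta> n * r^n) sums Gr r"
proof -
  have "(\<lambda>n. of_real (\<beta> n * r^n)) sums g (of_real r)" using g_sums[of "of_real r"] by simp
  hence "summable (\<lambda>n. \<beta> n * r^n)" using summable_of_real_iff sums_summable by blast
  thus ?thesis unfolding Gr_def by (simp add: summable_sums)
qed

lemma g_real: "g (of_real r) = of_real (Gr r)"
proof -
  have "(\<lambda>n. of_real (\<beta> n * r^n)) sums g (of_real r)" using g_sums[of "of_real r"] by simp
  moreover have "(\<lambda>n. of_real (\<beta> n * r^n)) sums (of_real (Gr r) :: complex)"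
    using Gr_sums[of r] by (rule sums_of_real)
  ultimately show ?thesis using sums_unique2 by blast
qed

lemma good_dB: assumes "t \<ge> 0" "s > 0" shows "good (dB t) (\<lambda>n. real n / s)"
  unfolding good_def
proof (intro allI impI)
  fix A :: real assume "A \<ge> 0"
  have "summable (\<lambda>n. \<beta> n * (t * exp (A / s))^n)" by (rule beta_summable) (use assms in auto)
  moreover have "norm (dB t n) * exp (A * \<bar>real n / s\<bar>) = \<beta> n * (t * exp (A / s))^n" for n
  proof -
    have "exp (A * \<bar>real n / s\<bar>) = exp (A / s) ^ n"
      using assms by (simp add: exp_of_nat_mult[symmetric] field_simps)
    moreover have "norm (dB t n) = \<beta> n * t^n" unfolding dB_def using assms beta_nonneg[of n]
      by (simp add: abs_mult norm_mult norm_power)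
    ultimately show ?thesis by (simp add: power_mult_distrib)
  qed
  ultimately show "summable (\<lambda>n. norm (dB t n) * exp (A * \<bar>real n / s\<bar>))" by simp
qed

lemma good_c: assumes "t \<ge> 0" "s > 0" shows "good (c t) (\<lambda>n. (real n - \<mu>) / s)"
  unfolding good_def
proof (intro allI impI)
  fix A :: real assume A: "A \<ge> 0"
  define C where "C = exp (A * \<bar>\<mu>\<bar> / s) / exp (Gr t)"
  have "summable (\<lambda>n. norm (a n) * (t * exp (A / s))^n)" by (rule a_summable) (use assms in auto)
  hence S: "summable (\<lambda>n. C * (norm (a n) * (t * exp (A / s))^n))" by (rule summable_mult)
  have B: "norm (c t n) * exp (A * \<bar>(real n - \<mu>) / s\<bar>) \<le> C * (norm (a n) * (t * exp (A / s))^n)" for n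
  proof -
    have "\<bar>(real n - \<mu>) / s\<bar> \<le> (real n + \<bar>\<mu>\<bar>) / s" using assms
      by (simp add: abs_div divide_right_mono)
    hence "A * \<bar>(real n - \<mu>) / s\<bar> \<le> A * ((real n + \<bar>\<mu>\<bar>) / s)"
      using A by (rule mult_left_mono)
    hence "exp (A * \<bar>(real n - \<mu>) / s\<bar>) \<le> exp (A * ((real n + \<bar>\<mu>\<bar>) / s))"
      by (simp only: exp_le_cancel_iff)
    also have "\<dots> = exp (A * \<bar>\<mu>\<bar> / s) * exp (A / s) ^ n"
      using assms by (simp add: exp_of_nat_mult[symmetric] field_simps exp_add[symmetric])
    finally have e: "exp (A * \<bar>(real n - \<mu>) / s\<bar>) \<le> exp (A * \<bar>\<mu>\<bar> / s) * exp (A / s) ^ n" .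
    have nc: "norm (c t n) = norm (a n) * t^n / exp (Gr t)"
      unfolding c_def using assms by (simp add: g_real exp_of_real norm_mult norm_divide norm_power)
    have "norm (c t n) * exp (A * \<bar>(real n - \<mu>) / s\<bar>) \<le> norm (a n) * t^n / exp (Gr t) * (exp (A * \<bar>\<mu>\<bar> / s) * exp (A / s) ^ n)"
      unfolding nc by (rule mult_left_mono[OF e]) (use assms in auto)
    also have "\<dots> = C * (norm (a n) * (t * exp (A / s))^n)"
      unfolding C_def by (simp add: power_mult_distrib)
    finally show ?thesis .
  qed
  show "summable (\<lambda>n. norm (c t n) * exp (A * \<bar>(real n - \<mu>) / s\<bar>))"
    by (rule summable_comparison_test'[OF S]) (use B in \<open>simp add: abs_mult\<close>)
qed

lemma KI: assumes "t > 0" "s > 0"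
  shows "esum (c t) (\<lambda>n. (real n - \<mu>) / s) =
     (\<lambda>\<theta>. exp (esum (dB t) (\<lambda>n. real n / s) \<theta> - of_real (Gr t) - \<theta> * of_real (\<mu> / s)))"
proof
  fix \<theta> :: complex
  define w where "w = of_real t * exp (\<theta> / of_real s)"
  have wn: "w^n = of_real t ^ n * exp (\<theta> * of_real (real n / s))" for n
  proof -
    have "exp (\<theta> / of_real s) ^ n = exp (of_nat n * (\<theta> / of_real s))" by (rule exp_of_nat_mult[symmetric])
    also have "of_nat n * (\<theta> / of_real s) = \<theta> * of_real (real n / s)" by simp
    finally show ?thesis unfolding w_def by (simp add: power_mult_distrib)
  qed
  have E: "esum (dB t) (\<lambda>n. real n / s) \<theta> = g w"
  proof -
    have "(\<lambda>n. dB t n * exp (\<theta> * of_real (real n / s))) sums g w"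
      using g_sums[of w] unfolding wn dB_def by (simp add: mult_ac)
    thus ?thesis unfolding esum_def by (simp add: sums_iff)
  qed
  define K where "K = exp (- (\<theta> * of_real (\<mu> / s))) / exp (of_real (Gr t))"
  have "(\<lambda>n. a n * w^n * K) sums (exp (g w) * K)" by (rule sums_mult2[OF f_sums])
  moreover have "a n * w^n * K = c t n * exp (\<theta> * of_real ((real n - \<mu>) / s))" for n
  proof -
    have "exp (\<theta> * of_real ((real n - \<mu>) / s)) = exp (\<theta> * of_real (real n / s)) * exp (- (\<theta> * of_real (\<mu> / s)))"
      by (simp add: exp_add[symmetric] diff_divide_distrib algebra_simps)
    thus ?thesis unfolding c_def K_def wn g_real by simp
  qed
  ultimately have "(\<lambda>n. c t n * exp (\<theta> * of_real ((real n - \<mu>) / s))) sums (exp (g w) * K)" by simp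
  hence "esum (c t) (\<lambda>n. (real n - \<mu>) / s) \<theta> = exp (g w) * K" unfolding esum_def by (simp add: sums_iff)
  also have "\<dots> = exp (g w - of_real (Gr t) - \<theta> * of_real (\<mu> / s))"
    unfolding K_def by (simp add: exp_diff exp_minus field_simps exp_add)
  finally show "esum (c t) (\<lambda>n. (real n - \<mu>) / s) \<theta> = exp (esum (dB t) (\<lambda>n. real n / s) \<theta> - of_real (Gr t) - \<theta> * of_real (\<mu> / s))"
    using E by simp
qed

end

lemma esum0: "esum d x 0 = suminf d" unfolding esum_def by simp

lemma re_deriv_esum:
  assumes "good d x"
  shows "Re ((deriv ^^ k) (esum d x) 0) = (\<Sum>n. Re (d n) * x n ^ k)"
proof -
  have s: "summable (\<lambda>n. d n * of_real (x n) ^ k)"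
    using good_summable[OF good_pow[OF assms, of k], of 0] by simp
  have "Re ((deriv ^^ k) (esum d x) 0) = Re (\<Sum>n. d n * of_real (x n) ^ k)"
    by (simp add: higher_deriv_esum[OF assms] esum0)
  also have "\<dots> = (\<Sum>n. Re (d n * of_real (x n) ^ k))" by (rule Re_suminf[OF s])
  also have "\<dots> = (\<Sum>n. Re (d n) * x n ^ k)" by (simp flip: of_real_power)
  finally show ?thesis .
qed

context kh begin

lemma prob_eq: assumes "t > 0" shows "khinchin_prob (\<lambda>z. exp (g z)) t n = Re (c t n)"
  unfolding khinchin_prob_def c_def a_def g_real exp_of_real
  by (simp flip: of_real_power)

lemma K_summable: assumes "t \<ge> 0" shows "summable (\<lambda>n. \<beta> n * t^n * real n ^ j)"
proof -
  have "summable (\<lambda>n. norm (dB t n * of_real (real n / 1) ^ j) * exp (0 * \<bar>real n / 1\<bar>))"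
    using good_pow[OF good_dB[OF assms, of 1], of j] unfolding good_def by auto
  thus ?thesis unfolding dB_def using assms beta_nonneg
    by (simp add: norm_mult norm_power abs_mult)
qed

lemma esum_dB_pow_0: assumes "t \<ge> 0" "s > 0"
  shows "esum (\<lambda>n. dB t n * of_real (real n / s) ^ j) (\<lambda>n. real n / s) 0
       = of_real ((\<Sum>n. \<beta> n * t^n * real n ^ j) / s^j)"
proof -
  have "(\<lambda>n. \<beta> n * t^n * real n ^ j / s^j) sums ((\<Sum>n. \<beta> n * t^n * real n ^ j) / s^j)"
    by (rule sums_divide[OF summable_sums[OF K_summable[OF assms(1)]]])
  hence "(\<lambda>n. of_real (\<beta> n * t^n * real n ^ j / s^j)) sums (of_real ((\<Sum>n. \<beta> n * t^n * real n ^ j) / s^j) :: complex)"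
    by (rule sums_of_real)
  moreover have "of_real (\<beta> n * t^n * real n ^ j / s^j) = dB t n * of_real (real n / s) ^ j" for n
    unfolding dB_def by (simp add: power_divide)
  ultimately show ?thesis unfolding esum0 by (simp add: sums_iff)
qed

lemma Gr_esum0: "t \<ge> 0 \<Longrightarrow> s > 0 \<Longrightarrow> esum (dB t) (\<lambda>n. real n / s) 0 = of_real (Gr t)"
  using esum_dB_pow_0[of t s 0] by (simp add: Gr_def)

definition P :: "real \<Rightarrow> real \<Rightarrow> real \<Rightarrow> complex \<Rightarrow> complex" where
  "P t \<mu> s \<theta> = esum (dB t) (\<lambda>n. real n / s) \<theta> - of_real (Gr t) - \<theta> * of_real (\<mu> / s)"

lemma D12: assumes "t > 0" "s > 0"
  shows "(deriv ^^ 1) (esum (c t) (\<lambda>n. (real n - \<mu>) / s)) 0 = of_real ((K1 t - \<mu>) / s)"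
    and "(deriv ^^ 2) (esum (c t) (\<lambda>n. (real n - \<mu>) / s)) 0 = of_real (((K1 t - \<mu>) / s)^2 + K2 t / s^2)"
proof -
  define x where "x = (\<lambda>n. real n / s)"
  define E where "E = esum (dB t) x"
  define E1 where "E1 = esum (\<lambda>n. dB t n * of_real (x n)) x"
  define E2 where "E2 = esum (\<lambda>n. dB t n * of_real (x n) * of_real (x n)) x"
  have gd: "good (dB t) x" unfolding x_def using assms by (intro good_dB) auto
  have dE: "(E has_field_derivative E1 \<theta>) (at \<theta>)" for \<theta> unfolding E_def E1_def by (rule esum_deriv[OF gd])
  have dE1: "(E1 has_field_derivative E2 \<theta>) (at \<theta>)" for \<theta> unfolding E1_def E2_def by (rule esum_deriv[OF good_mult[OF gd]])
  have Phi: "esum (c t) (\<lambda>n. (real n - \<mu>) / s) = (\<lambda>\<theta>. exp (E \<theta> - of_real (Gr t) - \<theta> * of_real (\<mu> / s)))"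
    unfolding E_def x_def by (rule KI[OF assms])
  have dPhi: "((\<lambda>\<theta>. exp (E \<theta> - of_real (Gr t) - \<theta> * of_real (\<mu> / s))) has_field_derivative
      exp (E \<theta> - of_real (Gr t) - \<theta> * of_real (\<mu> / s)) * (E1 \<theta> - of_real (\<mu> / s))) (at \<theta>)" for \<theta>
    using assms by (auto intro!: derivative_eq_intros dE)
  hence dPhi': "deriv (esum (c t) (\<lambda>n. (real n - \<mu>) / s)) = (\<lambda>\<theta>. exp (E \<theta> - of_real (Gr t) - \<theta> * of_real (\<mu> / s)) * (E1 \<theta> - of_real (\<mu> / s)))"
    unfolding Phi by (intro ext DERIV_imp_deriv)
  have E0: "E 0 = of_real (Gr t)" unfolding E_def x_def using assms by (intro Gr_esum0) auto
  have E10: "E1 0 = of_real (K1 t / s)"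
    using esum_dB_pow_0[of t s 1] assms unfolding E1_def x_def K1_def by simp
  have E20: "E2 0 = of_real (K2 t / s^2)"
  proof -
    have "E2 = esum (\<lambda>n. dB t n * of_real (real n / s) ^ 2) (\<lambda>n. real n / s)"
      unfolding E2_def x_def by (simp add: power2_eq_square mult.assoc)
    thus ?thesis using esum_dB_pow_0[of t s 2] assms unfolding K2_def by simp
  qed
  show "(deriv ^^ 1) (esum (c t) (\<lambda>n. (real n - \<mu>) / s)) 0 = of_real ((K1 t - \<mu>) / s)"
    using dPhi' E0 E10 by (simp add: diff_divide_distrib)
  have "((\<lambda>\<theta>. exp (E \<theta> - of_real (Gr t) - \<theta> * of_real (\<mu> / s)) * (E1 \<theta> - of_real (\<mu> / s))) has_field_derivative
      exp (E 0 - of_real (Gr t) - 0 * of_real (\<mu> / s)) * (E1 0 - of_real (\<mu> / s)) * (E1 0 - of_real (\<mu> / s))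
      + exp (E 0 - of_real (Gr t) - 0 * of_real (\<mu> / s)) * E2 0) (at 0)"
  proof -
    have h2: "((\<lambda>\<theta>. E1 \<theta> - of_real (\<mu> / s)) has_field_derivative E2 0) (at 0)"
      using DERIV_diff[OF dE1[of 0] DERIV_const] by simp
    from DERIV_mult[OF dPhi[of 0] h2] show ?thesis by (simp add: algebra_simps)
  qed
  hence "deriv (deriv (esum (c t) (\<lambda>n. (real n - \<mu>) / s))) 0 =
      exp (E 0 - of_real (Gr t) - 0 * of_real (\<mu> / s)) * (E1 0 - of_real (\<mu> / s)) * (E1 0 - of_real (\<mu> / s))
      + exp (E 0 - of_real (Gr t) - 0 * of_real (\<mu> / s)) * E2 0"
    unfolding dPhi' by (rule DERIV_imp_deriv)
  also have "\<dots> = of_real (((K1 t - \<mu>) / s)^2 + K2 t / s^2)"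
    unfolding E0 E10 E20 by (simp add: diff_divide_distrib power2_eq_square)
  finally show "(deriv ^^ 2) (esum (c t) (\<lambda>n. (real n - \<mu>) / s)) 0 = of_real (((K1 t - \<mu>) / s)^2 + K2 t / s^2)"
    by (simp add: numeral_2_eq_2)
qed

lemma mean_eq: assumes "t > 0" shows "khinchin_mean (\<lambda>z. exp (g z)) t = K1 t"
proof -
  have "khinchin_mean (\<lambda>z. exp (g z)) t = (\<Sum>n. Re (c t n) * ((real n - 0) / 1) ^ 1)"
    unfolding khinchin_mean_def prob_eq[OF assms] by (simp add: mult.commute)
  also have "\<dots> = Re ((deriv ^^ 1) (esum (c t) (\<lambda>n. (real n - 0) / 1)) 0)"
    by (rule re_deriv_esum[symmetric], rule good_c) (use assms in auto)
  also have "\<dots> = K1 t" using D12(1)[OF assms, of 1 0] by simp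
  finally show ?thesis .
qed

lemma var_eq: assumes "t > 0" shows "khinchin_var (\<lambda>z. exp (g z)) t = K2 t"
proof -
  have "khinchin_var (\<lambda>z. exp (g z)) t = (\<Sum>n. Re (c t n) * ((real n - K1 t) / 1) ^ 2)"
    unfolding khinchin_var_def prob_eq[OF assms] mean_eq[OF assms] by (simp add: mult.commute)
  also have "\<dots> = Re ((deriv ^^ 2) (esum (c t) (\<lambda>n. (real n - K1 t) / 1)) 0)"
    by (rule re_deriv_esum[symmetric], rule good_c) (use assms in auto)
  also have "\<dots> = K2 t" using D12(2)[OF assms, of 1 "K1 t"] by simp
  finally show ?thesis .
qed

lemma moment_eq: assumes "t > 0" "K2 t > 0"
  shows "khinchin_norm_moment (\<lambda>z. exp (g z)) t k =
     Re ((deriv ^^ k) (esum (c t) (\<lambda>n. (real n - K1 t) / sqrt (K2 t))) 0)"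
proof -
  have "khinchin_norm_moment (\<lambda>z. exp (g z)) t k = (\<Sum>n. Re (c t n) * ((real n - K1 t) / sqrt (K2 t)) ^ k)"
    unfolding khinchin_norm_moment_def prob_eq[OF assms(1)] mean_eq[OF assms(1)] var_eq[OF assms(1)]
    by (simp add: mult.commute)
  also have "\<dots> = Re ((deriv ^^ k) (esum (c t) (\<lambda>n. (real n - K1 t) / sqrt (K2 t))) 0)"
    by (rule re_deriv_esum[symmetric], rule good_c) (use assms in auto)
  finally show ?thesis .
qed

end

context kh begin

definition T :: "real \<Rightarrow> real" where
  "T t = (\<Sum>n. \<beta> n * t^n * (real n / sqrt (K2 t))^3 * exp (real n / sqrt (K2 t)))"

lemma T_summable: assumes "t \<ge> 0" "K2 t > 0"
  shows "summable (\<lambda>n. \<beta> n * t^n * (real n / sqrt (K2 t))^3 * exp (real n / sqrt (K2 t)))"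
proof -
  have "good (\<lambda>n. dB t n * of_real (real n / sqrt (K2 t)) ^ 3) (\<lambda>n. real n / sqrt (K2 t))"
    by (rule good_pow[OF good_dB]) (use assms in auto)
  from this[unfolded good_def, rule_format, of 1]
  have "summable (\<lambda>n. norm (dB t n * of_real (real n / sqrt (K2 t)) ^ 3) * exp (1 * \<bar>real n / sqrt (K2 t)\<bar>))"
    by simp
  moreover have "norm (dB t n * of_real (real n / sqrt (K2 t)) ^ 3) * exp (1 * \<bar>real n / sqrt (K2 t)\<bar>)
     = \<beta> n * t^n * (real n / sqrt (K2 t))^3 * exp (real n / sqrt (K2 t))" for n
    unfolding dB_def using assms beta_nonneg[of n]
    by (simp add: norm_mult norm_power abs_mult norm_divide)
  ultimately show ?thesis by simp
qed

lemma sum3: "(\<Sum>k<3. (z::complex)^k / fact k) = 1 + z + z^2/2"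
  by (simp add: numeral_3_eq_3 power2_eq_square)

lemma BL: assumes "t > 0" "K2 t > 0" "norm \<theta> \<le> 1"
  shows "norm (P t (K1 t) (sqrt (K2 t)) \<theta> - \<theta>^2/2) \<le> T t"
proof -
  define s where "s = sqrt (K2 t)"
  have s: "s > 0" "s^2 = K2 t" unfolding s_def using assms by auto
  define y where "y = (\<lambda>n. real n / s)"
  have gd: "good (dB t) y" unfolding y_def using assms s by (intro good_dB) auto
  have S1: "(\<lambda>n. dB t n * exp (\<theta> * of_real (y n))) sums esum (dB t) y \<theta>"
    unfolding esum_def by (rule summable_sums[OF good_summable[OF gd]])
  have S2: "(\<lambda>n. dB t n) sums of_real (Gr t)"
    unfolding dB_def by (rule sums_of_real[OF Gr_sums])
  have "(\<lambda>n. \<beta> n * t^n * real n ^ 1 / s) sums (K1 t / s)"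
    unfolding K1_def using K_summable[of t 1] assms by (intro sums_divide summable_sums) auto
  from sums_mult[OF sums_of_real[OF this], of \<theta>]
  have S3: "(\<lambda>n. dB t n * (\<theta> * of_real (y n))) sums (\<theta> * of_real (K1 t / s))"
    unfolding dB_def y_def by (simp add: algebra_simps)
  have "(\<lambda>n. \<beta> n * t^n * real n ^ 2 / s^2) sums (K2 t / s^2)"
    unfolding K2_def using K_summable[of t 2] assms by (intro sums_divide summable_sums) auto
  hence "(\<lambda>n. \<beta> n * t^n * (y n)^2) sums 1"
    using s assms(2) unfolding y_def by (simp add: power_divide)
  from sums_mult[OF sums_of_real[OF this], of "\<theta>^2/2"]
  have S4: "(\<lambda>n. dB t n * (\<theta> * of_real (y n))^2 / 2) sums (\<theta>^2/2)"
    unfolding dB_def by (simp add: algebra_simps power_mult_distrib)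
  have "(\<lambda>n. dB t n * exp (\<theta> * of_real (y n)) - dB t n - dB t n * (\<theta> * of_real (y n))
          - dB t n * (\<theta> * of_real (y n))^2 / 2)
        sums (esum (dB t) y \<theta> - of_real (Gr t) - \<theta> * of_real (K1 t / s) - \<theta>^2/2)"
    by (intro sums_diff S1 S2 S3 S4)
  moreover have "dB t n * exp (\<theta> * of_real (y n)) - dB t n - dB t n * (\<theta> * of_real (y n))
          - dB t n * (\<theta> * of_real (y n))^2 / 2
        = dB t n * (exp (\<theta> * of_real (y n)) - (\<Sum>k<3. (\<theta> * of_real (y n))^k / fact k))" for n
    unfolding sum3 by (simp add: algebra_simps)
  ultimately have SS: "(\<lambda>n. dB t n * (exp (\<theta> * of_real (y n)) - (\<Sum>k<3. (\<theta> * of_real (y n))^k / fact k)))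
        sums (P t (K1 t) s \<theta> - \<theta>^2/2)"
    unfolding P_def y_def by simp
  have bnd: "norm (dB t n * (exp (\<theta> * of_real (y n)) - (\<Sum>k<3. (\<theta> * of_real (y n))^k / fact k)))
       \<le> \<beta> n * t^n * (real n / s)^3 * exp (real n / s)" for n
  proof -
    have yn: "y n \<ge> 0" unfolding y_def using s by auto
    have nz: "norm (\<theta> * of_real (y n)) \<le> y n"
      using assms(3) yn by (simp add: norm_mult mult_left_le_one_le)
    have nd: "norm (dB t n) = \<beta> n * t^n" unfolding dB_def using assms beta_nonneg[of n]
      by (simp add: abs_mult norm_mult norm_power)
    have "norm (exp (\<theta> * of_real (y n)) - (\<Sum>k<3. (\<theta> * of_real (y n))^k / fact k))
        \<le> norm (\<theta> * of_real (y n)) ^ 3 * exp (norm (\<theta> * of_real (y n)))" by (rule exp_rem_bound)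
    also have "\<dots> \<le> y n ^ 3 * exp (y n)"
      using nz yn by (intro mult_mono power_mono) auto
    finally have "norm (dB t n * (exp (\<theta> * of_real (y n)) - (\<Sum>k<3. (\<theta> * of_real (y n))^k / fact k)))
       \<le> (\<beta> n * t^n) * (y n ^ 3 * exp (y n))"
      unfolding norm_mult nd using assms beta_nonneg[of n] by (intro mult_left_mono) auto
    thus ?thesis unfolding y_def by (simp add: mult.assoc)
  qed
  have "norm (P t (K1 t) s \<theta> - \<theta>^2/2) \<le> (\<Sum>n. \<beta> n * t^n * (real n / s)^3 * exp (real n / s))"
    using SS bnd T_summable[of t] assms unfolding s_def
    by (metis (no_types, lifting) norm_suminf_le sums_unique less_imp_le)
  thus ?thesis unfolding T_def s_def .
qed

lemma UB: assumes "t > 0" "K2 t > 0" "norm \<theta> \<le> 1"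
  shows "norm (exp (P t (K1 t) (sqrt (K2 t)) \<theta>) - gau \<theta>) \<le> exp (1/2) * (T t * exp (T t))"
proof -
  define p where "p = P t (K1 t) (sqrt (K2 t)) \<theta>"
  define q where "q = \<theta>^2/2"
  have pq: "norm (p - q) \<le> T t" unfolding p_def q_def by (rule BL[OF assms])
  have nq: "norm q \<le> 1/2" unfolding q_def using assms(3)
    by (simp add: norm_divide norm_power power_le_one)
  have "exp q * (exp (p - q) - 1) = exp p - exp q"
    by (simp add: right_diff_distrib exp_add[symmetric])
  hence "exp p - gau \<theta> = exp q * (exp (p - q) - 1)"
    unfolding gau_def q_def by simp
  hence "norm (exp p - gau \<theta>) = norm (exp q) * norm (exp (p - q) - 1)" by (simp add: norm_mult)
  also have "\<dots> \<le> exp (1/2) * (T t * exp (T t))"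
  proof (rule mult_mono)
    show "norm (exp q) \<le> exp (1/2)" using norm_exp[of q] nq by (meson exp_le_cancel_iff order_trans)
    have "norm (exp (p - q) - 1) \<le> norm (p - q) ^ 1 * exp (norm (p - q))"
      using exp_rem_bound[of "p - q" 1] by simp
    also have "\<dots> \<le> T t * exp (T t)"
      using pq order_trans[OF norm_ge_zero pq] by (intro mult_mono) auto
    finally show "norm (exp (p - q) - 1) \<le> T t * exp (T t)" .
  qed auto
  finally show ?thesis unfolding p_def .
qed

lemma MB: assumes "t > 0" "K2 t > 0"
  shows "\<bar>khinchin_norm_moment (\<lambda>z. exp (g z)) t k - integral\<^sup>L lborel (\<lambda>x. std_normal_density x * x ^ k)\<bar>
     \<le> fact k * (exp (1/2) * (T t * exp (T t)))"
proof -
  define \<Phi> where "\<Phi> = esum (c t) (\<lambda>n. (real n - K1 t) / sqrt (K2 t))"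
  define B where "B = exp (1/2) * (T t * exp (T t))"
  have gc: "good (c t) (\<lambda>n. (real n - K1 t) / sqrt (K2 t))" using assms by (intro good_c) auto
  have hP: "\<Phi> holomorphic_on UNIV" unfolding \<Phi>_def by (rule esum_holo[OF gc])
  have Peq: "\<Phi> \<theta> = exp (P t (K1 t) (sqrt (K2 t)) \<theta>)" for \<theta>
    unfolding \<Phi>_def P_def using KI[of t "sqrt (K2 t)" "K1 t"] assms by simp
  have hh: "(\<lambda>\<theta>. \<Phi> \<theta> - gau \<theta>) holomorphic_on UNIV" using hP gau_holo by (intro holomorphic_intros) auto
  have "norm ((deriv ^^ k) (\<lambda>\<theta>. \<Phi> \<theta> - gau \<theta>) 0) \<le> fact k * B / 1^k"
  proof (rule Cauchy_inequality)
    show "(\<lambda>\<theta>. \<Phi> \<theta> - gau \<theta>) holomorphic_on ball 0 1" using hh by (rule holomorphic_on_subset) auto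
    show "continuous_on (cball 0 1) (\<lambda>\<theta>. \<Phi> \<theta> - gau \<theta>)"
      using holomorphic_on_imp_continuous_on[OF hh] by (rule continuous_on_subset) auto
    show "norm (\<Phi> x - gau x) \<le> B" if "norm (0 - x) = 1" for x
      unfolding Peq B_def using that by (intro UB assms) auto
  qed auto
  moreover have "(deriv ^^ k) (\<lambda>\<theta>. \<Phi> \<theta> - gau \<theta>) 0 = (deriv ^^ k) \<Phi> 0 - (deriv ^^ k) gau 0"
    by (rule higher_deriv_diff[OF hP gau_holo]) auto
  ultimately have "norm ((deriv ^^ k) \<Phi> 0 - of_real (integral\<^sup>L lborel (\<lambda>x. std_normal_density x * x ^ k))) \<le> fact k * B"
    by (simp add: gau_moment)
  moreover have "khinchin_norm_moment (\<lambda>z. exp (g z)) t k = Re ((deriv ^^ k) \<Phi> 0)"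
    unfolding \<Phi>_def by (rule moment_eq[OF assms])
  ultimately show ?thesis unfolding B_def
    by (metis Re_complex_of_real abs_Re_le_cmod minus_complex.sel(1) order_trans)
qed

end

context kh begin

lemma exists_pos: "\<exists>d\<ge>1. \<beta> d > 0"
proof (rule ccontr)
  assume "\<not> ?thesis"
  hence z: "\<And>n. n \<noteq> 0 \<Longrightarrow> \<beta> n = 0" using beta_nonneg by (metis less_one not_le order_le_less)
  have "g w = of_real (\<beta> 0)" for w
  proof -
    have "(\<lambda>n. of_real (\<beta> n) * w^n) = (\<lambda>n. if n = 0 then of_real (\<beta> 0) else 0)"
      using z by auto
    hence "(\<lambda>n. of_real (\<beta> n) * w^n) sums (of_real (\<beta> 0))"
      using sums_single[of 0 "\<lambda>_. of_real (\<beta> 0) :: complex"] by simp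
    thus ?thesis using g_sums[of w] sums_unique2 by fastforce
  qed
  thus False using nonconst by blast
qed

lemma K2_ge: "t \<ge> 0 \<Longrightarrow> \<beta> n * t^n * real n ^ 2 \<le> K2 t"
  unfolding K2_def using sum_le_suminf[OF K_summable[of t 2], of "{n}"] beta_nonneg by auto

lemma Gr_ge: "r \<ge> 0 \<Longrightarrow> \<beta> n * r^n \<le> Gr r"
  unfolding Gr_def using sum_le_suminf[OF beta_summable[of r], of "{n}"] beta_nonneg by auto

lemma Gr_nonneg: "r \<ge> 0 \<Longrightarrow> Gr r \<ge> 0"
  using Gr_ge[of r 0] beta_nonneg[of 0] by auto

lemma K2_lin: assumes "\<beta> d > 0" "d \<ge> 1" "t \<ge> 1" shows "K2 t \<ge> \<beta> d * t"
proof -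
  have tt: "t \<le> t^d" using assms by (metis power_one_right power_increasing)
  have nn: "(1::real) \<le> real d ^ 2" using assms by simp
  have "\<beta> d * t \<le> \<beta> d * t^d" using tt assms by (intro mult_left_mono) auto
  also have "\<dots> = \<beta> d * t^d * 1" by simp
  also have "\<dots> \<le> \<beta> d * t^d * real d ^ 2" using nn assms by (intro mult_left_mono) auto
  finally show ?thesis using K2_ge[of t d] assms by linarith
qed

lemma Gr_pos: assumes "r > 0" shows "Gr r > 0"
proof -
  obtain d where "d \<ge> 1" "\<beta> d > 0" using exists_pos by blast
  hence "\<beta> d * r^d > 0" using assms by simp
  thus ?thesis using Gr_ge[of r d] assms by linarith
qed

lemma order_growth:
  assumes "entire_order g < \<infinity>"
  shows "\<exists>K::nat. eventually (\<lambda>r. ln (Gr r) \<le> r^K) at_top"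
proof -
  define M where "M r = Sup ((\<lambda>z. norm (g z)) ` sphere 0 r)" for r
  obtain K :: nat where K: "entire_order g < ereal (real K)"
    using assms less_PInf_Ex_of_nat by auto
  have ev: "eventually (\<lambda>r. ereal (ln (ln (M r)) / ln r) < ereal (real K)) at_top"
    using Limsup_lessD[OF K[unfolded entire_order_def]] unfolding M_def .
  have GM: "Gr r \<le> M r" if "r \<ge> 0" for r
  proof -
    have cont: "continuous_on (sphere 0 r) (\<lambda>z. norm (g z))"
      using holomorphic_on_imp_continuous_on[OF entire]
      by (intro continuous_on_norm) (auto intro: continuous_on_subset)
    have "bdd_above ((\<lambda>z. norm (g z)) ` sphere 0 r)"
      by (intro bounded_imp_bdd_above compact_imp_bounded compact_continuous_image cont compact_sphere)
    moreover have "of_real r \<in> sphere (0::complex) r" using that by simp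
    ultimately have "norm (g (of_real r)) \<le> M r" unfolding M_def by (intro cSup_upper) auto
    thus ?thesis using g_real[of r] Gr_nonneg[OF that] by simp
  qed
  have "eventually (\<lambda>r. ln (Gr r) \<le> r^K) at_top"
    using ev eventually_ge_at_top[of 3]
  proof eventually_elim
    case (elim r)
    have r: "r \<ge> 3" using elim by simp
    have lr: "ln r > 0" using r by simp
    have Gp: "Gr r > 0" using Gr_pos r by simp
    have lnGM: "ln (Gr r) \<le> ln (M r)" using GM[of r] Gp r by simp
    show ?case
    proof (cases "ln (M r) \<le> 0")
      case True
      have "0 \<le> r^K" using r by simp
      thus ?thesis using True lnGM by linarith
    next
      case False
      have "ln (ln (M r)) / ln r < real K" using elim by simp
      hence "ln (ln (M r)) < real K * ln r" using lr by (simp add: divide_less_eq)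
      hence "exp (ln (ln (M r))) < exp (real K * ln r)" by simp
      also have "exp (real K * ln r) = r^K" using r by (simp add: exp_of_nat_mult)
      finally show ?thesis using False lnGM by simp
    qed
  qed
  thus ?thesis by blast
qed

lemma growth:
  assumes "entire_order g < \<infinity>" "\<delta> > 0"
  shows "eventually (\<lambda>t. ln (Gr (18*t)) \<le> \<delta> * sqrt (K2 t)) at_top"
proof -
  obtain d where d: "d \<ge> 1" "\<beta> d > 0" using exists_pos by blast
  have sK2: "sqrt (\<beta> d) * sqrt t \<le> sqrt (K2 t)" if "t \<ge> 1" for t
    using K2_lin[OF d(2,1) that] by (metis real_sqrt_le_mono real_sqrt_mult)
  consider (poly) D where "\<And>n. n > D \<Longrightarrow> \<beta> n = 0" | (trans) "\<And>D. \<exists>n>D. \<beta> n > 0"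
    using beta_nonneg by (metis order_le_less)
  then show ?thesis
  proof cases
    case poly
    define C where "C = (\<Sum>n\<le>D. \<beta> n)"
    have GrD: "Gr y \<le> C * y^D" if "y \<ge> 1" for y
    proof -
      have "(\<lambda>n. \<beta> n * y^n) sums (\<Sum>n\<in>{..D}. \<beta> n * y^n)"
        by (rule sums_finite) (use poly in auto)
      hence "Gr y = (\<Sum>n\<le>D. \<beta> n * y^n)" using Gr_sums sums_unique2 by blast
      also have "\<dots> \<le> (\<Sum>n\<le>D. \<beta> n * y^D)"
        using that beta_nonneg by (intro sum_mono mult_left_mono power_increasing) auto
      also have "\<dots> = C * y^D" unfolding C_def by (simp add: sum_distrib_right)
      finally show ?thesis .
    qed
    have Cpos: "C > 0"
    proof -
      have "d \<le> D"
      proof (rule ccontr)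
        assume "\<not> d \<le> D" hence "\<beta> d = 0" using poly by simp
        thus False using d by simp
      qed
      hence "\<beta> d \<le> C" unfolding C_def using beta_nonneg by (intro member_le_sum) auto
      thus ?thesis using d by simp
    qed
    have lim: "((\<lambda>t::real. (ln C + real D * ln (18 * t)) / sqrt t) \<longlongrightarrow> 0) at_top" by real_asymp
    have "eventually (\<lambda>t. (ln C + real D * ln (18 * t)) / sqrt t < \<delta> * sqrt (\<beta> d)) at_top"
      using order_tendstoD(2)[OF lim] assms d by simp
    thus ?thesis using eventually_ge_at_top[of 1]
    proof eventually_elim
      case (elim t)
      have t: "t \<ge> 1" using elim by simp
      have "ln (Gr (18*t)) \<le> ln (C * (18*t)^D)"
        using GrD[of "18*t"] Gr_pos[of "18*t"] t by simp
      also have "\<dots> = ln C + real D * ln (18 * t)" using Cpos t by (simp add: ln_mult ln_realpow algebra_simps)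
      also have "\<dots> \<le> \<delta> * sqrt (\<beta> d) * sqrt t"
        using elim t by (simp add: divide_less_eq less_imp_le)
      also have "\<dots> \<le> \<delta> * sqrt (K2 t)" using sK2[OF t] assms by (simp add: mult.assoc)
      finally show ?case .
    qed
  next
    case trans
    obtain K :: nat where K: "eventually (\<lambda>r. ln (Gr r) \<le> r^K) at_top"
      using order_growth[OF assms(1)] by blast
    obtain n where n: "n > 2*K" "\<beta> n > 0" using trans by blast
    have K2n: "K2 t \<ge> \<beta> n * t^(2*K+1)" if "t \<ge> 1" for t
    proof -
      have "t^(2*K+1) \<le> t^n" using that n by (intro power_increasing) auto
      moreover have "(1::real) \<le> real n ^ 2" using n by simp
      ultimately have "\<beta> n * t^(2*K+1) \<le> \<beta> n * t^n * real n ^ 2"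
      proof -
        assume a1: "t^(2*K+1) \<le> t^n" and a2: "(1::real) \<le> real n ^ 2"
        have "\<beta> n * t^(2*K+1) \<le> \<beta> n * t^n" using a1 n by (intro mult_left_mono) auto
        also have "\<dots> = \<beta> n * t^n * 1" by simp
        also have "\<dots> \<le> \<beta> n * t^n * real n ^ 2" using a2 n that by (intro mult_left_mono) auto
        finally show ?thesis .
      qed
      thus ?thesis using K2_ge[of t n] that by linarith
    qed
    have sK: "sqrt (\<beta> n) * t^K * sqrt t \<le> sqrt (K2 t)" if "t \<ge> 1" for t
    proof -
      have a: "sqrt (\<beta> n * t^(2*K+1)) \<le> sqrt (K2 t)" using K2n[OF that] by (rule real_sqrt_le_mono)
      have b: "sqrt (\<beta> n * t^(2*K+1)) = sqrt (\<beta> n) * t^K * sqrt t"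
        using that n by (simp add: real_sqrt_mult power_add power_mult real_sqrt_power)
      show ?thesis unfolding b[symmetric] by (rule a)
    qed
    define X where "X = (18^K / (\<delta> * sqrt (\<beta> n)))^2"
    have K18: "eventually (\<lambda>t. ln (Gr (18*t)) \<le> (18*t)^K) at_top"
      using K by (rule eventually_compose_filterlim) real_asymp
    show ?thesis using K18 eventually_ge_at_top[of 1] eventually_ge_at_top[of X]
    proof eventually_elim
      case (elim t)
      have t: "t \<ge> 1" "t \<ge> X" using elim by auto
      have "18^K / (\<delta> * sqrt (\<beta> n)) \<le> sqrt t"
        using t(2) unfolding X_def by (metis real_sqrt_le_mono real_sqrt_abs abs_ge_self order_trans)
      hence "18^K \<le> \<delta> * sqrt (\<beta> n) * sqrt t" using assms n by (simp add: divide_le_eq mult.commute)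
      hence "18^K * t^K \<le> \<delta> * sqrt (\<beta> n) * sqrt t * t^K" using t by (simp add: mult_right_mono)
      also have "\<dots> = \<delta> * (sqrt (\<beta> n) * t^K * sqrt t)" by (simp add: ac_simps)
      also have "\<dots> \<le> \<delta> * sqrt (K2 t)" using sK[OF t(1)] assms by simp
      finally show ?case using elim by (simp add: power_mult_distrib)
    qed
  qed
qed

end

lemma cube_exp: assumes "(x::real) \<ge> 0" shows "x^3 \<le> 27 * exp x"
proof -
  have "x/3 \<le> exp (x/3)" using exp_ge_add_one_self[of "x/3"] by linarith
  hence "(x/3)^3 \<le> exp (x/3)^3" using assms by (intro power_mono) auto
  also have "exp (x/3)^3 = exp x" by (simp flip: exp_of_nat_mult)
  finally show ?thesis by (simp add: power_divide)
qed

lemma exp2_le: "exp (2::real) \<le> 9"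
proof -
  have "exp (2::real) = exp 1 ^ 2" by (simp flip: exp_of_nat_mult)
  also have "\<dots> \<le> 3^2" using exp_le by (intro power_mono) auto
  finally show ?thesis by simp
qed

context kh begin

lemma TB:
  assumes t: "t \<ge> 1" and s: "s \<ge> 1" and e: "0 < \<epsilon>" "\<epsilon> \<le> 1" and cc_def: "cc = ln 2 / 2"
  shows "\<beta> n * t^n * (real n / s)^3 * exp (real n / s) \<le>
     \<epsilon> * exp \<epsilon> * (\<beta> n * t^n * real n ^ 2 / s^2) +
     27 * Gr (18*t) / s^3 * exp (- (\<epsilon> * s * cc)) * exp (-cc)^n"
proof -
  have cc: "cc > 0" unfolding cc_def by simp
  have b: "\<beta> n \<ge> 0" by (rule beta_nonneg)
  have bt: "\<beta> n * t^n \<ge> 0" using b t by simp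
  have Gr0: "Gr (18*t) \<ge> 0" using Gr_nonneg t by simp
  have R0: "0 \<le> 27 * Gr (18*t) / s^3 * exp (- (\<epsilon> * s * cc)) * exp (-cc)^n"
    using Gr0 s by simp
  have L0: "0 \<le> \<epsilon> * exp \<epsilon> * (\<beta> n * t^n * real n ^ 2 / s^2)" using e bt by simp
  define y where "y = real n / s"
  have y0: "y \<ge> 0" unfolding y_def using s by simp
  have eqL: "\<beta> n * t^n * (real n / s)^3 * exp (real n / s) = \<beta> n * t^n * (y^3 * exp y)"
    unfolding y_def by simp
  have "\<beta> n * t^n * (y^3 * exp y) \<le> \<epsilon> * exp \<epsilon> * (\<beta> n * t^n * real n ^ 2 / s^2) +
     27 * Gr (18*t) / s^3 * exp (- (\<epsilon> * s * cc)) * exp (-cc)^n"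
  proof (cases "real n \<le> \<epsilon> * s")
    case True
    have ye: "y \<le> \<epsilon>" unfolding y_def using True s by (simp add: divide_le_eq)
    have "y^3 * exp y = y * (y^2 * exp y)" by (simp add: power3_eq_cube power2_eq_square)
    also have "\<dots> \<le> \<epsilon> * (y^2 * exp \<epsilon>)" using ye y0 by (intro mult_mono) auto
    finally have "\<beta> n * t^n * (y^3 * exp y) \<le> \<beta> n * t^n * (\<epsilon> * (y^2 * exp \<epsilon>))"
      using bt by (rule mult_left_mono)
    also have "\<dots> = \<epsilon> * exp \<epsilon> * (\<beta> n * t^n * real n ^ 2 / s^2)"
      unfolding y_def by (simp add: power_divide)
    finally show ?thesis using R0 by linarith
  next
    case False
    have "y^3 * exp y \<le> (real n)^3 / s^3 * exp (real n)"
    proof (rule mult_mono)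
      show "y^3 \<le> real n ^ 3 / s^3" unfolding y_def by (simp add: power_divide)
      show "exp y \<le> exp (real n)" unfolding y_def using s by (simp add: divide_le_eq mult_le_cancel_left1)
    qed (use s in auto)
    also have "\<dots> \<le> 27 * exp (real n) / s^3 * exp (real n)"
      using cube_exp[of "real n"] s by (intro mult_right_mono divide_right_mono) auto
    also have "\<dots> = 27 / s^3 * exp 2 ^ n"
      by (simp add: exp_of_nat_mult[symmetric] exp_add[symmetric] algebra_simps)
    finally have A: "\<beta> n * t^n * (y^3 * exp y) \<le> \<beta> n * t^n * (27 / s^3 * exp 2 ^ n)"
      using bt by (rule mult_left_mono)
    have "t^n * exp 2 ^ n \<le> t^n * 9^n" using exp2_le t by (intro mult_left_mono power_mono) auto
    also have "\<dots> = (18*t)^n * (1/2)^n"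
    proof -
      have "(18*t)^n * (1/2::real)^n = (18*t*(1/2))^n" by (rule power_mult_distrib[symmetric])
      also have "18*t*(1/2) = t*(9::real)" by simp
      also have "(t*9)^n = t^n * (9::real)^n" by (rule power_mult_distrib)
      finally show ?thesis by (simp only: eq_commute)
    qed
    finally have "t^n * exp 2 ^ n \<le> (18*t)^n * (1/2)^n" .
    hence "\<beta> n * (t^n * exp 2 ^ n) \<le> \<beta> n * ((18*t)^n * (1/2)^n)" using b by (rule mult_left_mono)
    also have "\<dots> = (\<beta> n * (18*t)^n) * (1/2)^n" by simp
    also have "\<dots> \<le> Gr (18*t) * (1/2)^n" using Gr_ge[of "18*t" n] t by (intro mult_right_mono) auto
    finally have B: "\<beta> n * (t^n * exp 2 ^ n) \<le> Gr (18*t) * (1/2)^n" .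
    have q2: "exp (-cc)^n * exp (-cc)^n = (1/2::real)^n"
    proof -
      have "exp (-cc) * exp (-cc) = exp (- ln 2)" unfolding cc_def by (simp flip: exp_add)
      also have "\<dots> = 1/2" by (simp add: exp_minus)
      finally have E: "exp (-cc) * exp (-cc) = (1/2::real)" .
      show ?thesis by (simp only: power_mult_distrib[symmetric] E)
    qed
    have "exp (-cc)^n = exp (- (real n * cc))" by (simp flip: exp_of_nat_mult)
    also have "\<dots> \<le> exp (- (\<epsilon> * s * cc))" using False cc by (simp add: mult_right_mono)
    finally have C: "(1/2::real)^n \<le> exp (- (\<epsilon> * s * cc)) * exp (-cc)^n"
      unfolding q2[symmetric] by (intro mult_right_mono) auto
    have "\<beta> n * t^n * (y^3 * exp y) \<le> 27 / s^3 * (\<beta> n * (t^n * exp 2 ^ n))"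
      using A by (simp add: ac_simps)
    also have "\<dots> \<le> 27 / s^3 * (Gr (18*t) * (1/2)^n)" using B s by (intro mult_left_mono) auto
    also have "\<dots> \<le> 27 / s^3 * (Gr (18*t) * (exp (- (\<epsilon> * s * cc)) * exp (-cc)^n))"
      using C Gr0 s by (intro mult_left_mono) auto
    also have "\<dots> = 27 * Gr (18*t) / s^3 * exp (- (\<epsilon> * s * cc)) * exp (-cc)^n" by simp
    finally show ?thesis using L0 by linarith
  qed
  thus ?thesis unfolding eqL .
qed

end

context kh begin

lemma T_lim: assumes fo: "entire_order g < \<infinity>" shows "(T \<longlongrightarrow> 0) at_top"
proof -
  obtain d where d: "d \<ge> 1" "\<beta> d > 0" using exists_pos by blast
  define cc :: real where "cc = ln 2 / 2"
  have cc: "cc > 0" unfolding cc_def by simp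
  define q where "q = exp (-cc)"
  have q: "0 < q" "q < 1" unfolding q_def using cc by auto
  show ?thesis
  proof (rule tendstoI)
    fix \<eta> :: real assume \<eta>: "\<eta> > 0"
    define \<epsilon> where "\<epsilon> = min 1 (\<eta>/6)"
    have \<epsilon>: "0 < \<epsilon>" "\<epsilon> \<le> 1" "\<epsilon> \<le> \<eta>/6" unfolding \<epsilon>_def using \<eta> by auto
    define Y where "Y = max 1 (2 * ln (54 / (\<eta> * (1 - q))) / (\<epsilon> * cc) + 1)"
    have Y1: "Y \<ge> 1" unfolding Y_def by simp
    have ev1: "eventually (\<lambda>t. ln (Gr (18*t)) \<le> (\<epsilon>*cc/2) * sqrt (K2 t)) at_top"
      by (rule growth[OF fo]) (use \<epsilon> cc in auto)
    have ev2: "eventually (\<lambda>t. sqrt (K2 t) \<ge> Y) at_top"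
      using eventually_ge_at_top[of "max 1 (Y^2 / \<beta> d)"]
    proof eventually_elim
      case (elim t)
      have "Y^2 \<le> \<beta> d * t" using elim d by (simp add: divide_le_eq mult.commute)
      also have "\<dots> \<le> K2 t" using K2_lin[OF d(2,1)] elim by simp
      finally show ?case by (rule real_le_rsqrt)
    qed
    show "eventually (\<lambda>t. dist (T t) 0 < \<eta>) at_top"
      using ev1 ev2 eventually_ge_at_top[of 1]
    proof eventually_elim
      case (elim t)
      define s where "s = sqrt (K2 t)"
      have t: "t \<ge> 1" using elim by simp
      have s1: "s \<ge> 1" using elim Y1 unfolding s_def by linarith
      have K2p: "K2 t > 0" using s1 unfolding s_def by (metis not_le order_less_le_trans real_sqrt_le_0_iff zero_less_one)
      have ss: "s^2 = K2 t" unfolding s_def using K2p by simp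
      define R where "R = 27 * Gr (18*t) / s^3 * exp (- (\<epsilon> * s * cc))"
      have TB': "\<beta> n * t^n * (real n / s)^3 * exp (real n / s) \<le>
          \<epsilon> * exp \<epsilon> * (\<beta> n * t^n * real n ^ 2 / s^2) + R * q^n" for n
        unfolding R_def q_def using TB[OF t s1 \<epsilon>(1,2) cc_def, of n] by simp
      have S1: "(\<lambda>n. \<epsilon> * exp \<epsilon> * (\<beta> n * t^n * real n ^ 2 / s^2)) sums (\<epsilon> * exp \<epsilon> * (K2 t / s^2))"
        unfolding K2_def using K_summable[of t 2] t
        by (intro sums_mult sums_divide summable_sums) auto
      have S2: "(\<lambda>n. R * q^n) sums (R * (1 / (1 - q)))"
        by (intro sums_mult geometric_sums) (use q in auto)
      have ST: "(\<lambda>n. \<beta> n * t^n * (real n / s)^3 * exp (real n / s)) sums T t"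
        unfolding T_def s_def using T_summable[of t] t K2p by (intro summable_sums) auto
      have Tle: "T t \<le> \<epsilon> * exp \<epsilon> * (K2 t / s^2) + R * (1 / (1 - q))"
        by (rule sums_le[OF TB' ST sums_add[OF S1 S2]])
      have tn: "0 \<le> \<beta> n * t^n * (real n / s)^3 * exp (real n / s)" for n
        using beta_nonneg[of n] t s1 by (intro mult_nonneg_nonneg) auto
      have T0: "0 \<le> T t" by (rule sums_le[OF tn sums_zero ST])
      have A: "\<epsilon> * exp \<epsilon> * (K2 t / s^2) \<le> \<eta> / 2"
      proof -
        have "exp \<epsilon> \<le> 3" using exp_le \<epsilon>(2) by (meson exp_le_cancel_iff order_trans)
        hence e3: "\<epsilon> * exp \<epsilon> \<le> \<epsilon> * 3" using \<epsilon> by (intro mult_left_mono) auto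
        have K1: "K2 t / s^2 = 1" using ss K2p by simp
        show ?thesis unfolding K1 using e3 \<epsilon>(3) by linarith
      qed
      have B: "R * (1 / (1 - q)) < \<eta> / 2"
      proof -
        have Gp: "Gr (18*t) > 0" using Gr_pos t by simp
        define L where "L = ln (54 / (\<eta> * (1 - q)))"
        have pos: "\<eta> * (1 - q) > 0" using \<eta> q by simp
        have e1: "exp (ln (Gr (18*t)) - \<epsilon> * s * cc) = Gr (18*t) * exp (- (\<epsilon> * s * cc))"
        proof -
          have "exp (ln (Gr (18*t)) - \<epsilon> * s * cc) = exp (ln (Gr (18*t))) * exp (- (\<epsilon> * s * cc))"
            by (metis exp_add diff_conv_add_uminus)
          thus ?thesis using Gp by simp
        qed
        have h: "ln (Gr (18*t)) \<le> (\<epsilon>*cc/2) * s" using elim unfolding s_def by simp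
        have h2: "\<epsilon> * s * cc = (\<epsilon>*cc/2) * s + (\<epsilon>*cc/2) * s" by (simp add: field_simps)
        have "ln (Gr (18*t)) - \<epsilon> * s * cc \<le> - ((\<epsilon>*cc/2) * s)" using h h2 by linarith
        hence G1: "Gr (18*t) * exp (- (\<epsilon> * s * cc)) \<le> exp (- ((\<epsilon>*cc/2) * s))"
          unfolding e1[symmetric] by (simp only: exp_le_cancel_iff)
        have YX: "Y \<ge> 2 * L / (\<epsilon> * cc) + 1" unfolding Y_def L_def by simp
        have sX: "s > 2 * L / (\<epsilon> * cc)" using elim YX unfolding s_def by linarith
        have ec: "\<epsilon>*cc/2 > 0" using \<epsilon> cc by simp
        have "(\<epsilon>*cc/2) * (2 * L / (\<epsilon> * cc)) < (\<epsilon>*cc/2) * s"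
          by (rule mult_strict_left_mono[OF sX ec])
        moreover have "(\<epsilon>*cc/2) * (2 * L / (\<epsilon> * cc)) = L" using \<epsilon> cc by (simp add: field_simps)
        ultimately have "- ((\<epsilon>*cc/2) * s) < - L" by linarith
        hence "exp (- ((\<epsilon>*cc/2) * s)) < exp (- L)" by (simp only: exp_less_cancel_iff)
        also have "exp (- L) = \<eta> * (1 - q) / 54"
          unfolding L_def exp_minus using pos by simp
        finally have G: "Gr (18*t) * exp (- (\<epsilon> * s * cc)) < \<eta> * (1 - q) / 54" using G1 by linarith
        have R1: "R = (27 * (Gr (18*t) * exp (- (\<epsilon> * s * cc)))) / s^3" unfolding R_def by simp
        have s3: "s^3 \<ge> 1" using s1 by simp
        have nn: "0 \<le> 27 * (Gr (18*t) * exp (- (\<epsilon> * s * cc)))" using Gp by simp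
        have "R \<le> 27 * (Gr (18*t) * exp (- (\<epsilon> * s * cc)))"
          unfolding R1 using divide_left_mono[OF s3 nn] s3 s1 by simp
        hence Rl: "R < \<eta> * (1 - q) / 2" using G by linarith
        have "R * (1 / (1 - q)) = R / (1 - q)" by simp
        also have "\<dots> < \<eta> / 2" using Rl q by (simp add: divide_less_eq algebra_simps)
        finally show ?thesis .
      qed
      have "T t < \<eta>" using Tle A B by linarith
      thus ?case using T0 by (simp add: dist_real_def)
    qed
  qed
qed

end

theorem proposition4p11:
  fixes g :: "complex \<Rightarrow> complex"
  assumes entire: "g holomorphic_on UNIV"
    and nonconst: "\<not> (\<exists>c. \<forall>z. g z = c)"
    and finite_order: "entire_order g < \<infinity>"
    and coeff_nonneg: "\<And>n. Im (taylor_coeff g n) = 0 \<and> Re (taylor_coeff g n) \<ge> 0"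
  shows "\<forall>m::nat. m \<ge> 1 \<longrightarrow>
    ((\<lambda>t. khinchin_norm_moment (\<lambda>z. exp (g z)) t m) \<longlongrightarrow>
       integral\<^sup>L lborel (\<lambda>x. std_normal_density x * x ^ m)) at_top"
proof -
  interpret kh g using entire nonconst coeff_nonneg by unfold_locales auto
  obtain d where d: "d \<ge> 1" "\<beta> d > 0" using exists_pos by blast
  show ?thesis
  proof (intro allI impI)
    fix m :: nat assume "m \<ge> 1"
    define M where "M = integral\<^sup>L lborel (\<lambda>x. std_normal_density x * x ^ m)"
    have lim: "((\<lambda>t. fact m * (exp (1/2) * (T t * exp (T t)))) \<longlongrightarrow> fact m * (exp (1/2) * (0 * exp 0))) at_top"
      by (intro tendsto_intros T_lim[OF finite_order])
    have "((\<lambda>t. khinchin_norm_moment (\<lambda>z. exp (g z)) t m - M) \<longlongrightarrow> 0) at_top"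
    proof (rule Lim_null_comparison)
      show "eventually (\<lambda>t. norm (khinchin_norm_moment (\<lambda>z. exp (g z)) t m - M) \<le> fact m * (exp (1/2) * (T t * exp (T t)))) at_top"
        using eventually_ge_at_top[of 1]
      proof eventually_elim
        case (elim t)
        have "\<beta> d * t > 0" using d elim by simp
        hence "K2 t > 0" using K2_lin[OF d(2,1) elim] by linarith
        thus ?case using MB[of t m] elim unfolding M_def by simp
      qed
      show "((\<lambda>t. fact m * (exp (1/2) * (T t * exp (T t)))) \<longlongrightarrow> 0) at_top" using lim by simp
    qed
    thus "((\<lambda>t. khinchin_norm_moment (\<lambda>z. exp (g z)) t m) \<longlongrightarrow> M) at_top"
      by (rule LIM_zero_cancel)
  qed
qed

end
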